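(* Assume $n\ge 3$. Consider finite compositions of the rotation-only operations $h_1(\varphi_1),\dots,h_{m-1}(\varphi_{m-1})$ and $f_m(\varphi_m)$ with real arguments (each occurrence of $h_i$, $f_m$ may be used any number of times). (a) Any such composition leaves all robot positions unchanged, and the vector of net orientation changes $(\Delta\theta_1,\dots,\Delta\theta_n)$ equals $A u \bmod 2\pi$, where $u\in\mathbb R^m$ has $u_i$ equal to the sum of the arguments of all occurrences of $h_i$ ($i<m$), resp. $f_m$ ($i=m$), and $A$ is the $n\times m$ matrix with $A_{j,i}=1-\alpha_{i,j}$ for $i<m$ and $A_{j,m}=1$. (b) For any three distinct robots $j_1,j_2,j_3$ and any target orientations $\beta_1,\beta_2,\beta_3$, there is such a composition after which robot $j_s$ has orientation $\beta_s$ (mod $2\pi$) for $s=1,2,3$. (c) Since $\operatorname{rank}A\le m$, for any set $S$ of more than $m$ robots there exist target orientations for the robots in $S$ that cannot be attained simultaneously by any such composition.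
   Context: A swarm of $n$ planar robots; robot $j$ has state $(x_j,y_j,\theta_j)$, $\theta_j$ mod $2\pi$; all robots have the same turning radius $r>0$. Groups $G_1,\dots,G_m$ with activation vectors $\alpha_i\in\{0,1\}^n$ ($\alpha_{i,j}=1$ iff robot $j\in G_i$); the patterns $(\alpha_{1,j},\dots,\alpha_{m-1,j})$, $j=1,\dots,n$, are pairwise distinct, none all zeros, none all ones; $G_m=\emptyset$. Dynamics: one group $\nu(t)$ active at a time, input $u(t)>0$; with $a_j=\alpha_{\nu(t),j}$: $\dot x_j=a_j\cos\theta_j u$, $\dot y_j=a_j\sin\theta_j u$, $\dot\theta_j=(1-a_j)u/r$. $f_m(\varphi)$ ($\varphi>0$) = activate $G_m$ with $\int u\,dt=r\varphi$, rotating every robot in place by $\varphi$; for real $\varphi$ it is interpreted mod $2\pi$ (as $f_m$ of a positive representative). $h_i(\varphi)$ ($i<m$, $\varphi\in\mathbb R$): an activation sequence (which exists) whose net effect leaves members of $G_i$ unchanged and keeps non-members in place with orientation increased by $\varphi$ mod $2\pi$. *)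

theory Defs
  imports Complex_Main
begin

text \<open>Robots are indexed 1..n, groups 1..m.  alpha i j holds iff robot j is in group G_i.
  A swarm state is a triple of functions (x, y, theta) on robot indices.\<close>

type_synonym rstate = "(nat \<Rightarrow> real) \<times> (nat \<Rightarrow> real) \<times> (nat \<Rightarrow> real)"

definition posx :: "rstate \<Rightarrow> nat \<Rightarrow> real" where "posx st = fst st"
definition posy :: "rstate \<Rightarrow> nat \<Rightarrow> real" where "posy st = fst (snd st)"
definition ori  :: "rstate \<Rightarrow> nat \<Rightarrow> real" where "ori st = snd (snd st)"

definition cong2pi :: "real \<Rightarrow> real \<Rightarrow> bool" where
  "cong2pi a b \<longleftrightarrow> (\<exists>k::int. a - b = 2 * pi * of_int k)"

text \<open>Exact solution of the dynamics when group i is active with total input integral s: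
  active robots (constant heading) drive straight a distance s, inactive robots turn in place
  by s / r.\<close>
definition activate :: "(nat \<Rightarrow> nat \<Rightarrow> bool) \<Rightarrow> real \<Rightarrow> nat \<Rightarrow> real \<Rightarrow> rstate \<Rightarrow> rstate" where
  "activate alpha r i s st =
     ((\<lambda>j. if alpha i j then posx st j + cos (ori st j) * s else posx st j),
      (\<lambda>j. if alpha i j then posy st j + sin (ori st j) * s else posy st j),
      (\<lambda>j. if alpha i j then ori st j else ori st j + s / r))"

definition run_seq :: "(nat \<Rightarrow> nat \<Rightarrow> bool) \<Rightarrow> real \<Rightarrow> (nat \<times> real) list \<Rightarrow> rstate \<Rightarrow> rstate" where
  "run_seq alpha r sq st = fold (\<lambda>(i, s). activate alpha r i s) sq st"

definition valid_seq :: "nat \<Rightarrow> (nat \<times> real) list \<Rightarrow> bool" where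
  "valid_seq m sq \<longleftrightarrow> (\<forall>(i, s) \<in> set sq. i \<in> {1..m} \<and> s > 0)"

definition pos_rep :: "real \<Rightarrow> real" where
  "pos_rep phi = (let t = phi - 2 * pi * of_int \<lfloor>phi / (2 * pi)\<rfloor> in if t = 0 then 2 * pi else t)"

datatype rot_op = Hop nat real | Fop real

text \<open>h_i(phi) is realised by the activation sequence hseq i phi (a parameter; its existence and
  required net effect are assumptions of the theorem).  f_m(phi) activates G_m with input
  integral r times a positive representative of phi.\<close>
definition op_eff :: "(nat \<Rightarrow> nat \<Rightarrow> bool) \<Rightarrow> real \<Rightarrow> nat \<Rightarrow> (nat \<Rightarrow> real \<Rightarrow> (nat \<times> real) list)
    \<Rightarrow> rot_op \<Rightarrow> rstate \<Rightarrow> rstate" where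
  "op_eff alpha r m hseq op st =
     (case op of Hop i phi \<Rightarrow> run_seq alpha r (hseq i phi) st
              | Fop phi \<Rightarrow> activate alpha r m (r * pos_rep phi) st)"

definition run_ops :: "(nat \<Rightarrow> nat \<Rightarrow> bool) \<Rightarrow> real \<Rightarrow> nat \<Rightarrow> (nat \<Rightarrow> real \<Rightarrow> (nat \<times> real) list)
    \<Rightarrow> rot_op list \<Rightarrow> rstate \<Rightarrow> rstate" where
  "run_ops alpha r m hseq ops st = fold (op_eff alpha r m hseq) ops st"

definition valid_ops :: "nat \<Rightarrow> rot_op list \<Rightarrow> bool" where
  "valid_ops m ops \<longleftrightarrow> (\<forall>op \<in> set ops. case op of Hop i phi \<Rightarrow> i \<in> {1..m-1} | Fop phi \<Rightarrow> True)"

definition usum :: "nat \<Rightarrow> rot_op list \<Rightarrow> nat \<Rightarrow> real" where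
  "usum m ops i =
     (if i = m then sum_list (map (\<lambda>op. case op of Fop phi \<Rightarrow> phi | Hop k phi \<Rightarrow> 0) ops)
      else sum_list (map (\<lambda>op. case op of Hop k phi \<Rightarrow> (if k = i then phi else 0) | Fop phi \<Rightarrow> 0) ops))"

definition Amat :: "(nat \<Rightarrow> nat \<Rightarrow> bool) \<Rightarrow> nat \<Rightarrow> nat \<Rightarrow> nat \<Rightarrow> real" where
  "Amat alpha m j i = (if i = m then 1 else 1 - (if alpha i j then 1 else 0))"

end

theory Submission imports "HOL-Library.Function_Algebras" "HOL-Analysis.Continuum_Not_Denumerable" Defs begin

lemma cong_refl[simp]: "cong2pi a a" unfolding cong2pi_def by (rule exI[of _ 0]) simp
lemma cong_sym: "cong2pi a b \<Longrightarrow> cong2pi b a"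
  unfolding cong2pi_def by (metis add.inverse_inverse minus_diff_eq mult_minus_right of_int_minus)
lemma cong_trans: "cong2pi a b \<Longrightarrow> cong2pi b c \<Longrightarrow> cong2pi a c"
  unfolding cong2pi_def
proof -
  assume "\<exists>k::int. a - b = 2 * pi * of_int k" "\<exists>k::int. b - c = 2 * pi * of_int k"
  then obtain k l :: int where "a - b = 2 * pi * of_int k" "b - c = 2 * pi * of_int l" by blast
  then have "a - c = 2 * pi * of_int (k + l)" by (simp add: algebra_simps)
  then show "\<exists>k::int. a - c = 2 * pi * of_int k" by blast
qed
lemma cong_add: "cong2pi a b \<Longrightarrow> cong2pi c d \<Longrightarrow> cong2pi (a + c) (b + d)"
  unfolding cong2pi_def
proof -
  assume "\<exists>k::int. a - b = 2 * pi * of_int k" "\<exists>k::int. c - d = 2 * pi * of_int k"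
  then obtain k l :: int where "a - b = 2 * pi * of_int k" "c - d = 2 * pi * of_int l" by blast
  then have "(a + c) - (b + d) = 2 * pi * of_int (k + l)" by (simp add: algebra_simps)
  then show "\<exists>k::int. (a + c) - (b + d) = 2 * pi * of_int k" by blast
qed

lemma pos_rep_cong: "cong2pi (pos_rep phi) phi"
proof -
  define t where "t = phi - 2 * pi * of_int \<lfloor>phi / (2 * pi)\<rfloor>"
  have c1: "cong2pi t phi" unfolding cong2pi_def t_def
    by (rule exI[of _ "- \<lfloor>phi / (2 * pi)\<rfloor>"]) simp
  show ?thesis
  proof (cases "t = 0")
    case True
    have "cong2pi (2*pi) t" unfolding cong2pi_def True by (rule exI[of _ 1]) simp
    then show ?thesis using c1 True unfolding pos_rep_def t_def[symmetric] Let_def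
      by (simp add: cong_trans)
  next
    case False
    then show ?thesis using c1 unfolding pos_rep_def t_def[symmetric] Let_def by simp
  qed
qed

lemma run_ops_Cons: "run_ops alpha r m hseq (op # ops) st = run_ops alpha r m hseq ops (op_eff alpha r m hseq op st)"
  unfolding run_ops_def by simp
lemma run_ops_append: "run_ops alpha r m hseq (ops1 @ ops2) st = run_ops alpha r m hseq ops2 (run_ops alpha r m hseq ops1 st)"
  unfolding run_ops_def by simp
lemma run_ops_Nil: "run_ops alpha r m hseq [] st = st"
  unfolding run_ops_def by simp

definition Dop :: "(nat \<Rightarrow> nat \<Rightarrow> bool) \<Rightarrow> nat \<Rightarrow> rot_op \<Rightarrow> real" where
  "Dop alpha j op = (case op of Fop phi \<Rightarrow> phi | Hop k phi \<Rightarrow> (if alpha k j then 0 else phi))"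

lemma usum_Cons: "usum m (op # ops) i =
   (if i = m then (case op of Fop phi \<Rightarrow> phi | Hop k phi \<Rightarrow> 0)
    else (case op of Hop k phi \<Rightarrow> (if k = i then phi else 0) | Fop phi \<Rightarrow> 0)) + usum m ops i"
  unfolding usum_def by simp

definition cop :: "nat \<Rightarrow> rot_op \<Rightarrow> nat \<Rightarrow> real" where
  "cop m op i = (if i = m then (case op of Fop phi \<Rightarrow> phi | Hop k phi \<Rightarrow> 0)
    else (case op of Hop k phi \<Rightarrow> (if k = i then phi else 0) | Fop phi \<Rightarrow> 0))"

lemma usum_Cons': "usum m (op # ops) i = cop m op i + usum m ops i"
  unfolding usum_Cons cop_def by simp

lemma cop_Hop: "cop m (Hop k phi) i = (if i \<noteq> m \<and> k = i then phi else 0)"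
  unfolding cop_def by simp
lemma cop_Fop: "cop m (Fop phi) i = (if i = m then phi else 0)"
  unfolding cop_def by simp

lemma contrib: assumes "m \<ge> 1" "valid_ops m [op]"
  shows "(\<Sum>i = 1..m. Amat alpha m j i * cop m op i) = Dop alpha j op"
proof (cases op)
  case (Hop k phi)
  then have k: "k \<in> {1..m-1}" using assms unfolding valid_ops_def by auto
  have "(\<Sum>i = 1..m. Amat alpha m j i * cop m op i)
      = (\<Sum>i = 1..m. (if i = k then Amat alpha m j k * phi else 0))"
    using k unfolding Hop cop_Hop by (intro sum.cong) auto
  also have "\<dots> = Amat alpha m j k * phi" using k by (auto simp add: sum.delta)
  finally show ?thesis using k unfolding Hop by (auto simp add: Dop_def Amat_def)
next
  case (Fop phi)
  have "(\<Sum>i = 1..m. Amat alpha m j i * cop m op i)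
      = (\<Sum>i = 1..m. (if i = m then phi else 0))"
    unfolding Fop cop_Fop by (intro sum.cong) (auto simp: Amat_def)
  also have "\<dots> = phi" using assms(1) by simp
  finally show ?thesis unfolding Fop by (simp add: Dop_def)
qed

lemma usum_Nil: "usum m [] i = 0" unfolding usum_def by (simp only: list.map sum_list.Nil if_cancel)

lemma sumA: assumes "m \<ge> 1" "valid_ops m ops"
  shows "(\<Sum>i = 1..m. Amat alpha m j i * usum m ops i) = sum_list (map (Dop alpha j) ops)"
  using assms(2)
proof (induction ops)
  case Nil
  then show ?case by (simp add: usum_Nil)
next
  case (Cons op ops)
  have v: "valid_ops m ops" using Cons.prems unfolding valid_ops_def by simp
  have v1: "valid_ops m [op]" using Cons.prems unfolding valid_ops_def by simp
  have "(\<Sum>i = 1..m. Amat alpha m j i * usum m (op # ops) i)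
      = (\<Sum>i = 1..m. Amat alpha m j i * cop m op i) + (\<Sum>i = 1..m. Amat alpha m j i * usum m ops i)"
    unfolding usum_Cons' by (simp add: distrib_left sum.distrib)
  then show ?case using Cons.IH[OF v] contrib[OF assms(1) v1] by simp
qed

lemma cong_diff: "cong2pi a (b + c) \<Longrightarrow> cong2pi (a - b) c"
  unfolding cong2pi_def by (simp add: algebra_simps)

lemma step_eff:
  assumes Gm_empty: "\<forall>j. \<not> alpha m j" and r_pos: "r > 0"
    and h_seq: "\<forall>i \<in> {1..m-1}. \<forall>phi. valid_seq m (hseq i phi) \<and>
                 (\<forall>st. \<forall>j \<in> {1..n}.
                    posx (run_seq alpha r (hseq i phi) st) j = posx st j \<and>
                    posy (run_seq alpha r (hseq i phi) st) j = posy st j \<and>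
                    cong2pi (ori (run_seq alpha r (hseq i phi) st) j)
                            (ori st j + (if alpha i j then 0 else phi)))"
    and v: "valid_ops m [op]" and j: "j \<in> {1..n}"
  shows "posx (op_eff alpha r m hseq op st) j = posx st j \<and>
         posy (op_eff alpha r m hseq op st) j = posy st j \<and>
         cong2pi (ori (op_eff alpha r m hseq op st) j - ori st j) (Dop alpha j op)"
proof (cases op)
  case (Hop k phi)
  then have k: "k \<in> {1..m-1}" using v unfolding valid_ops_def by auto
  have H: "posx (run_seq alpha r (hseq k phi) st) j = posx st j \<and>
                    posy (run_seq alpha r (hseq k phi) st) j = posy st j \<and>
                    cong2pi (ori (run_seq alpha r (hseq k phi) st) j)
                            (ori st j + (if alpha k j then 0 else phi))"
    using h_seq k j by blast
  show ?thesis unfolding Hop op_eff_def Dop_def using H cong_diff by simp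
next
  case (Fop phi)
  have "ori (op_eff alpha r m hseq op st) j - ori st j = pos_rep phi"
    using Gm_empty r_pos unfolding Fop op_eff_def activate_def ori_def by simp
  then show ?thesis using Gm_empty pos_rep_cong[of phi]
    unfolding Fop op_eff_def activate_def posx_def posy_def Dop_def by simp
qed

lemma partA:
  assumes Gm_empty: "\<forall>j. \<not> alpha m j" and r_pos: "r > 0"
    and h_seq: "\<forall>i \<in> {1..m-1}. \<forall>phi. valid_seq m (hseq i phi) \<and>
                 (\<forall>st. \<forall>j \<in> {1..n}.
                    posx (run_seq alpha r (hseq i phi) st) j = posx st j \<and>
                    posy (run_seq alpha r (hseq i phi) st) j = posy st j \<and>
                    cong2pi (ori (run_seq alpha r (hseq i phi) st) j)
                            (ori st j + (if alpha i j then 0 else phi)))"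
    and v: "valid_ops m ops" and j: "j \<in> {1..n}"
  shows "posx (run_ops alpha r m hseq ops st) j = posx st j \<and>
         posy (run_ops alpha r m hseq ops st) j = posy st j \<and>
         cong2pi (ori (run_ops alpha r m hseq ops st) j - ori st j) (sum_list (map (Dop alpha j) ops))"
  using v
proof (induction ops arbitrary: st)
  case Nil
  then show ?case by (simp add: run_ops_Nil)
next
  case (Cons op ops)
  have v': "valid_ops m ops" using Cons.prems unfolding valid_ops_def by simp
  have v1: "valid_ops m [op]" using Cons.prems unfolding valid_ops_def by simp
  define st' where "st' = op_eff alpha r m hseq op st"
  have IH: "posx (run_ops alpha r m hseq ops st') j = posx st' j \<and>
         posy (run_ops alpha r m hseq ops st') j = posy st' j \<and>
         cong2pi (ori (run_ops alpha r m hseq ops st') j - ori st' j) (sum_list (map (Dop alpha j) ops))"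
    using Cons.IH[OF v'] .
  have S: "posx st' j = posx st j \<and> posy st' j = posy st j \<and> cong2pi (ori st' j - ori st j) (Dop alpha j op)"
    unfolding st'_def using step_eff[OF Gm_empty r_pos h_seq v1 j] .
  have "cong2pi ((ori (run_ops alpha r m hseq ops st') j - ori st' j) + (ori st' j - ori st j))
     (sum_list (map (Dop alpha j) ops) + Dop alpha j op)"
    using IH S cong_add by blast
  then show ?case using IH S unfolding run_ops_Cons st'_def[symmetric] by (simp add: add.commute)
qed

lemma three_span:
  fixes P :: "real \<Rightarrow> real \<Rightarrow> real \<Rightarrow> bool"
  assumes add: "\<And>a b c a' b' c'. P a b c \<Longrightarrow> P a' b' c' \<Longrightarrow> P (a+a') (b+b') (c+c')"
    and diag: "\<And>t. P t t t"
    and gen: "\<And>t i. i \<in> I \<Longrightarrow> P (if f i then 0 else t) (if g i then 0 else t) (if h i then 0 else t)"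
    and fg: "\<exists>i\<in>I. f i \<noteq> g i" and gh: "\<exists>i\<in>I. g i \<noteq> h i" and fh: "\<exists>i\<in>I. f i \<noteq> h i"
  shows "P x y z"
proof -
  have E1: "P t 0 0" if "i \<in> I" "f i \<noteq> g i" "g i = h i" for i t
  proof (cases "f i")
    case True
    then have g0: "P (0) (-t) (-t)" using gen[OF that(1), of "-t"] that by simp
    have "P (0 + t) (-t + t) (-t + t)" using add[OF g0 diag[of t]] .
    then show ?thesis by simp
  next
    case False
    then show ?thesis using gen[OF that(1), of t] that by simp
  qed
  have E2: "P 0 t 0" if "i \<in> I" "f i \<noteq> g i" "f i = h i" for i t
  proof (cases "g i")
    case True
    then have g0: "P (-t) (0) (-t)" using gen[OF that(1), of "-t"] that by simp
    have "P (-t + t) (0 + t) (-t + t)" using add[OF g0 diag[of t]] .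
    then show ?thesis by simp
  next
    case False
    then show ?thesis using gen[OF that(1), of t] that by simp
  qed
  have E3: "P 0 0 t" if "i \<in> I" "h i \<noteq> g i" "f i = g i" for i t
  proof (cases "h i")
    case True
    then have g0: "P (-t) (-t) (0)" using gen[OF that(1), of "-t"] that by simp
    have "P (-t + t) (-t + t) (0 + t)" using add[OF g0 diag[of t]] .
    then show ?thesis by simp
  next
    case False
    then show ?thesis using gen[OF that(1), of t] that by simp
  qed
  have S1: "(\<forall>t. P t 0 0) \<or> (\<forall>t. P 0 t 0)" using fg E1 E2 by metis
  have S2: "(\<forall>t. P 0 0 t) \<or> (\<forall>t. P 0 t 0)" using gh E3 E2 by metis
  have S3: "(\<forall>t. P t 0 0) \<or> (\<forall>t. P 0 0 t)" using fh E1 E3 by metis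
  have A1: "\<forall>t. P t 0 0" and A2: "\<forall>t. P 0 t 0" and A3: "\<forall>t. P 0 0 t"
  proof -
    have c12: "P 0 0 t" if "\<forall>t. P t 0 0" "\<forall>t. P 0 t 0" for t
    proof -
      have "P (t + -t + 0) (t + 0 + -t) (t + 0 + 0)" using add[OF add[OF diag that(1)[rule_format]] that(2)[rule_format]] .
      then show ?thesis by simp
    qed
    have c13: "P 0 t 0" if "\<forall>t. P t 0 0" "\<forall>t. P 0 0 t" for t
    proof -
      have "P (t + -t + 0) (t + 0 + 0) (t + 0 + -t)" using add[OF add[OF diag that(1)[rule_format]] that(2)[rule_format]] .
      then show ?thesis by simp
    qed
    have c23: "P t 0 0" if "\<forall>t. P 0 t 0" "\<forall>t. P 0 0 t" for t
    proof -
      have "P (t + 0 + 0) (t + -t + 0) (t + 0 + -t)" using add[OF add[OF diag that(1)[rule_format]] that(2)[rule_format]] .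
      then show ?thesis by simp
    qed
    show "\<forall>t. P t 0 0" using S1 S2 S3 c23 by blast
    show "\<forall>t. P 0 t 0" using S1 S2 S3 c13 by blast
    show "\<forall>t. P 0 0 t" using S1 S2 S3 c12 by blast
  qed
  have "P (x + 0 + 0) (0 + y + 0) (0 + 0 + z)" using add[OF add[OF A1[rule_format] A2[rule_format]] A3[rule_format]] .
  then show ?thesis by simp
qed

lemma sum_fun_apply': "(\<Sum>x\<in>A. F x) (i::'c) = (\<Sum>x\<in>A. (F x i :: real))"
  by (induction A rule: infinite_finite_induct) auto

lemma dep_rows:
  fixes R :: "nat \<Rightarrow> nat \<Rightarrow> real"
  assumes fin: "finite S" and card: "card S > m"
  shows "\<exists>w. (\<exists>j\<in>S. w j \<noteq> 0) \<and> (\<forall>i\<in>{1..m}. (\<Sum>j\<in>S. w j * R j i) = 0)"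
proof -
  interpret V: vector_space "\<lambda>(c::real) (f::nat\<Rightarrow>real). (\<lambda>i. c * f i)"
    by unfold_locales (auto simp: fun_eq_iff algebra_simps)
  define row where "row j = (\<lambda>i. if i \<in> {1..m} then R j i else 0)" for j
  define e where "e k = (\<lambda>i::nat. if i = k then (1::real) else 0)" for k
  define E where "E = e ` {1..m}"
  have finE: "finite E" and cardE: "card E \<le> m" unfolding E_def using card_image_le[of "{1..m}" e] by auto
  have rowspan: "row j \<in> V.span E" for j
  proof -
    have eq: "row j = (\<Sum>k\<in>{1..m}. (\<lambda>i. R j k * e k i))"
    proof
      fix i
      show "row j i = (\<Sum>k\<in>{1..m}. (\<lambda>i. R j k * e k i)) i"
        unfolding sum_fun_apply' row_def e_def by (auto simp: if_distrib sum.delta cong: if_cong)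
    qed
    show ?thesis unfolding eq
      by (intro V.span_sum V.span_scale V.span_base) (auto simp: E_def)
  qed
  show ?thesis
  proof (cases "inj_on row S")
    case True
    have cimg: "card (row ` S) = card S" using card_image[OF True] .
    have "\<not> V.independent (row ` S)"
    proof
      assume "V.independent (row ` S)"
      then have "card (row ` S) \<le> card E" using V.independent_span_bound[OF finE] rowspan by blast
      then show False using cimg cardE card by simp
    qed
    then obtain u where u: "\<exists>v\<in>row ` S. u v \<noteq> 0" "(\<Sum>v\<in>row ` S. (\<lambda>i. u v * v i)) = 0"
      using V.dependent_finite[of "row ` S"] fin by auto
    show ?thesis
    proof (intro exI[of _ "\<lambda>j. u (row j)"] conjI ballI)
      show "\<exists>j\<in>S. u (row j) \<noteq> 0" using u(1) by auto
      fix i assume i: "i \<in> {1..m}"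
      have "0 = (\<Sum>v\<in>row ` S. (\<lambda>i. u v * v i)) i" using u(2) by simp
      also have "\<dots> = (\<Sum>v\<in>row ` S. u v * v i)" by (rule sum_fun_apply')
      also have "\<dots> = (\<Sum>j\<in>S. u (row j) * row j i)" using sum.reindex[OF True] by simp
      also have "\<dots> = (\<Sum>j\<in>S. u (row j) * R j i)" using i by (simp add: row_def)
      finally show "(\<Sum>j\<in>S. u (row j) * R j i) = 0" by simp
    qed
  next
    case False
    then obtain j j' where jj: "j \<in> S" "j' \<in> S" "j \<noteq> j'" "row j = row j'"
      unfolding inj_on_def by blast
    show ?thesis
    proof (intro exI[of _ "\<lambda>x. (if x = j then 1 else 0) - (if x = j' then 1 else 0)"] conjI ballI)
      show "\<exists>x\<in>S. (if x = j then 1 else 0) - (if x = j' then 1 else 0) \<noteq> (0::real)"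
        using jj by auto
      fix i assume i: "i \<in> {1..m}"
      have Rij: "R j i = R j' i" using fun_cong[OF jj(4), of i] i by (simp add: row_def)
      have "(\<Sum>x\<in>S. ((if x = j then 1 else 0) - (if x = j' then 1 else 0)) * R x i)
          = (\<Sum>x\<in>S. (if x = j then R j i else 0) - (if x = j' then R j' i else 0))"
        by (intro sum.cong) auto
      also have "\<dots> = (\<Sum>x\<in>S. (if x = j then R j i else 0)) - (\<Sum>x\<in>S. (if x = j' then R j' i else 0))"
        by (rule sum_subtractf)
      also have "\<dots> = 0" using jj fin Rij by (simp add: sum.delta)
      finally show "(\<Sum>x\<in>S. ((if x = j then 1 else 0) - (if x = j' then 1 else 0)) * R x i) = 0" .
    qed
  qed
qed

lemma countable_combs:
  fixes w :: "nat \<Rightarrow> real"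
  assumes "finite S"
  shows "countable {(\<Sum>j\<in>S. w j * of_int (k j)) | k :: nat \<Rightarrow> int. True}"
  using assms
proof (induction S rule: finite_induct)
  case empty
  then show ?case by simp
next
  case (insert a S)
  let ?C = "{(\<Sum>j\<in>S. w j * of_int (k j)) | k :: nat \<Rightarrow> int. True}"
  have "{(\<Sum>j\<in>insert a S. w j * of_int (k j)) | k :: nat \<Rightarrow> int. True}
     \<subseteq> (\<lambda>(x, z::int). w a * of_int z + x) ` (?C \<times> UNIV)"
  proof
    fix y assume "y \<in> {(\<Sum>j\<in>insert a S. w j * of_int (k j)) | k :: nat \<Rightarrow> int. True}"
    then obtain k :: "nat \<Rightarrow> int" where y: "y = (\<Sum>j\<in>insert a S. w j * of_int (k j))" by blast
    then have "y = w a * of_int (k a) + (\<Sum>j\<in>S. w j * of_int (k j))" using insert by simp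
    then show "y \<in> (\<lambda>(x, z::int). w a * of_int z + x) ` (?C \<times> UNIV)"
      by (intro image_eqI[of _ _ "((\<Sum>j\<in>S. w j * of_int (k j)), k a)"]) auto
  qed
  moreover have "countable ((\<lambda>(x, z::int). w a * of_int z + x) ` (?C \<times> UNIV))"
    using insert.IH by auto
  ultimately show ?case using countable_subset by blast
qed

lemma cong_diff2: "cong2pi (a - b) (c - b) \<Longrightarrow> cong2pi a c"
  unfolding cong2pi_def by simp

lemma valid_append: "valid_ops m (xs @ ys) \<longleftrightarrow> valid_ops m xs \<and> valid_ops m ys"
  unfolding valid_ops_def by auto

theorem mainTheorem4:
  fixes n m :: nat and r :: real
    and alpha :: "nat \<Rightarrow> nat \<Rightarrow> bool"
    and hseq :: "nat \<Rightarrow> real \<Rightarrow> (nat \<times> real) list"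
  assumes n3: "n \<ge> 3"
    and r_pos: "r > 0"
    and distinct_pat: "\<forall>j1 \<in> {1..n}. \<forall>j2 \<in> {1..n}. j1 \<noteq> j2 \<longrightarrow> (\<exists>i \<in> {1..m-1}. alpha i j1 \<noteq> alpha i j2)"
    and not_zero: "\<forall>j \<in> {1..n}. \<exists>i \<in> {1..m-1}. alpha i j"
    and not_ones: "\<forall>j \<in> {1..n}. \<exists>i \<in> {1..m-1}. \<not> alpha i j"
    and Gm_empty: "\<forall>j. \<not> alpha m j"
    and h_seq: "\<forall>i \<in> {1..m-1}. \<forall>phi. valid_seq m (hseq i phi) \<and>
                 (\<forall>st. \<forall>j \<in> {1..n}.
                    posx (run_seq alpha r (hseq i phi) st) j = posx st j \<and>
                    posy (run_seq alpha r (hseq i phi) st) j = posy st j \<and>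
                    cong2pi (ori (run_seq alpha r (hseq i phi) st) j)
                            (ori st j + (if alpha i j then 0 else phi)))"
  shows
    "(\<forall>ops st. valid_ops m ops \<longrightarrow>
        (\<forall>j \<in> {1..n}.
           posx (run_ops alpha r m hseq ops st) j = posx st j \<and>
           posy (run_ops alpha r m hseq ops st) j = posy st j \<and>
           cong2pi (ori (run_ops alpha r m hseq ops st) j - ori st j)
                   (\<Sum>i = 1..m. Amat alpha m j i * usum m ops i)))
     \<and> (\<forall>j1 \<in> {1..n}. \<forall>j2 \<in> {1..n}. \<forall>j3 \<in> {1..n}.
          j1 \<noteq> j2 \<longrightarrow> j1 \<noteq> j3 \<longrightarrow> j2 \<noteq> j3 \<longrightarrow>
          (\<forall>beta1 beta2 beta3 st. \<exists>ops. valid_ops m ops \<and>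
              cong2pi (ori (run_ops alpha r m hseq ops st) j1) beta1 \<and>
              cong2pi (ori (run_ops alpha r m hseq ops st) j2) beta2 \<and>
              cong2pi (ori (run_ops alpha r m hseq ops st) j3) beta3))
     \<and> (\<forall>S. S \<subseteq> {1..n} \<longrightarrow> card S > m \<longrightarrow>
          (\<forall>st. \<exists>beta :: nat \<Rightarrow> real. \<forall>ops. valid_ops m ops \<longrightarrow>
              \<not> (\<forall>j \<in> S. cong2pi (ori (run_ops alpha r m hseq ops st) j) (beta j))))"
  proof -
  have m1: "m \<ge> 1"
  proof -
    have "1 \<in> {1..n}" using n3 by simp
    then obtain i where "i \<in> {1..m-1}" using not_zero by blast
    then show ?thesis by (simp add: atLeastAtMost_iff) linarith
  qed
  have A: "posx (run_ops alpha r m hseq ops st) j = posx st j \<and>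
           posy (run_ops alpha r m hseq ops st) j = posy st j \<and>
           cong2pi (ori (run_ops alpha r m hseq ops st) j - ori st j) (\<Sum>i = 1..m. Amat alpha m j i * usum m ops i)"
    if v: "valid_ops m ops" and j: "j \<in> {1..n}" for ops st j
    using partA[OF Gm_empty r_pos h_seq v j] sumA[OF m1 v] by simp
  have B: "\<forall>j1 \<in> {1..n}. \<forall>j2 \<in> {1..n}. \<forall>j3 \<in> {1..n}.
          j1 \<noteq> j2 \<longrightarrow> j1 \<noteq> j3 \<longrightarrow> j2 \<noteq> j3 \<longrightarrow>
          (\<forall>beta1 beta2 beta3 st. \<exists>ops. valid_ops m ops \<and>
              cong2pi (ori (run_ops alpha r m hseq ops st) j1) beta1 \<and>
              cong2pi (ori (run_ops alpha r m hseq ops st) j2) beta2 \<and>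
              cong2pi (ori (run_ops alpha r m hseq ops st) j3) beta3)"
  proof (intro ballI impI allI)
    fix j1 j2 j3 beta1 beta2 beta3 st
    assume j: "j1 \<in> {1..n}" "j2 \<in> {1..n}" "j3 \<in> {1..n}" "j1 \<noteq> j2" "j1 \<noteq> j3" "j2 \<noteq> j3"
    define P where "P d1 d2 d3 = (\<forall>st. \<exists>ops. valid_ops m ops \<and>
        cong2pi (ori (run_ops alpha r m hseq ops st) j1 - ori st j1) d1 \<and>
        cong2pi (ori (run_ops alpha r m hseq ops st) j2 - ori st j2) d2 \<and>
        cong2pi (ori (run_ops alpha r m hseq ops st) j3 - ori st j3) d3)" for d1 d2 d3
    have D: "cong2pi (ori (run_ops alpha r m hseq ops st) j - ori st j) (sum_list (map (Dop alpha j) ops))"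
      if "valid_ops m ops" "j \<in> {1..n}" for ops st j
      using partA[OF Gm_empty r_pos h_seq that] by simp
    have "P d1 d2 d3" for d1 d2 d3
    proof (rule three_span[where I = "{1..m-1}" and f = "\<lambda>i. alpha i j1" and g = "\<lambda>i. alpha i j2" and h = "\<lambda>i. alpha i j3"])
      fix a b c a' b' c'
      assume P1: "P a b c" and P2: "P a' b' c'"
      show "P (a + a') (b + b') (c + c')" unfolding P_def
      proof
        fix st
        obtain ops1 where o1: "valid_ops m ops1"
          "cong2pi (ori (run_ops alpha r m hseq ops1 st) j1 - ori st j1) a"
          "cong2pi (ori (run_ops alpha r m hseq ops1 st) j2 - ori st j2) b"
          "cong2pi (ori (run_ops alpha r m hseq ops1 st) j3 - ori st j3) c"
          using P1 unfolding P_def by blast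
        define st1 where "st1 = run_ops alpha r m hseq ops1 st"
        obtain ops2 where o2: "valid_ops m ops2"
          "cong2pi (ori (run_ops alpha r m hseq ops2 st1) j1 - ori st1 j1) a'"
          "cong2pi (ori (run_ops alpha r m hseq ops2 st1) j2 - ori st1 j2) b'"
          "cong2pi (ori (run_ops alpha r m hseq ops2 st1) j3 - ori st1 j3) c'"
          using P2 unfolding P_def by blast
        have e: "run_ops alpha r m hseq (ops1 @ ops2) st = run_ops alpha r m hseq ops2 st1"
          unfolding st1_def run_ops_append ..
        show "\<exists>ops. valid_ops m ops \<and>
          cong2pi (ori (run_ops alpha r m hseq ops st) j1 - ori st j1) (a + a') \<and>
          cong2pi (ori (run_ops alpha r m hseq ops st) j2 - ori st j2) (b + b') \<and>
          cong2pi (ori (run_ops alpha r m hseq ops st) j3 - ori st j3) (c + c')"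
        proof (rule exI[of _ "ops1 @ ops2"], unfold e valid_append, intro conjI)
          show "valid_ops m ops1" "valid_ops m ops2" using o1 o2 by auto
          have g: "cong2pi (ori (run_ops alpha r m hseq ops2 st1) jj - ori st jj) (x + x')"
            if "cong2pi (ori st1 jj - ori st jj) x" "cong2pi (ori (run_ops alpha r m hseq ops2 st1) jj - ori st1 jj) x'"
            for jj x x'
          proof -
            have "cong2pi ((ori (run_ops alpha r m hseq ops2 st1) jj - ori st1 jj) + (ori st1 jj - ori st jj)) (x' + x)"
              using cong_add[OF that(2) that(1)] .
            then show ?thesis by (simp add: add.commute)
          qed
          show "cong2pi (ori (run_ops alpha r m hseq ops2 st1) j1 - ori st j1) (a + a')"
            using g[OF o1(2)[folded st1_def] o2(2)] by blast
          show "cong2pi (ori (run_ops alpha r m hseq ops2 st1) j2 - ori st j2) (b + b')"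
            using g[OF o1(3)[folded st1_def] o2(3)] by blast
          show "cong2pi (ori (run_ops alpha r m hseq ops2 st1) j3 - ori st j3) (c + c')"
            using g[OF o1(4)[folded st1_def] o2(4)] by blast
        qed
      qed
    next
      fix t
      show "P t t t" unfolding P_def
      proof
        fix st
        have v: "valid_ops m [Fop t]" unfolding valid_ops_def by simp
        show "\<exists>ops. valid_ops m ops \<and>
          cong2pi (ori (run_ops alpha r m hseq ops st) j1 - ori st j1) t \<and>
          cong2pi (ori (run_ops alpha r m hseq ops st) j2 - ori st j2) t \<and>
          cong2pi (ori (run_ops alpha r m hseq ops st) j3 - ori st j3) t"
          using D[OF v j(1), of st] D[OF v j(2), of st] D[OF v j(3), of st] v
          by (intro exI[of _ "[Fop t]"]) (simp add: Dop_def)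
      qed
    next
      fix t i assume i: "i \<in> {1..m-1}"
      show "P (if alpha i j1 then 0 else t) (if alpha i j2 then 0 else t) (if alpha i j3 then 0 else t)"
        unfolding P_def
      proof
        fix st
        have v: "valid_ops m [Hop i t]" using i unfolding valid_ops_def by simp
        show "\<exists>ops. valid_ops m ops \<and>
          cong2pi (ori (run_ops alpha r m hseq ops st) j1 - ori st j1) (if alpha i j1 then 0 else t) \<and>
          cong2pi (ori (run_ops alpha r m hseq ops st) j2 - ori st j2) (if alpha i j2 then 0 else t) \<and>
          cong2pi (ori (run_ops alpha r m hseq ops st) j3 - ori st j3) (if alpha i j3 then 0 else t)"
          using D[OF v j(1), of st] D[OF v j(2), of st] D[OF v j(3), of st] v
          by (intro exI[of _ "[Hop i t]"]) (simp add: Dop_def)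
      qed
    next
      show "\<exists>i\<in>{1..m-1}. alpha i j1 \<noteq> alpha i j2" using distinct_pat j by blast
      show "\<exists>i\<in>{1..m-1}. alpha i j2 \<noteq> alpha i j3" using distinct_pat j by blast
      show "\<exists>i\<in>{1..m-1}. alpha i j1 \<noteq> alpha i j3" using distinct_pat j by blast
    qed
    then obtain ops where o: "valid_ops m ops"
        "cong2pi (ori (run_ops alpha r m hseq ops st) j1 - ori st j1) (beta1 - ori st j1)"
        "cong2pi (ori (run_ops alpha r m hseq ops st) j2 - ori st j2) (beta2 - ori st j2)"
        "cong2pi (ori (run_ops alpha r m hseq ops st) j3 - ori st j3) (beta3 - ori st j3)"
      unfolding P_def by blast
    show "\<exists>ops. valid_ops m ops \<and>
              cong2pi (ori (run_ops alpha r m hseq ops st) j1) beta1 \<and>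
              cong2pi (ori (run_ops alpha r m hseq ops st) j2) beta2 \<and>
              cong2pi (ori (run_ops alpha r m hseq ops st) j3) beta3"
      using o cong_diff2 by blast
  qed
  have C: "\<forall>S. S \<subseteq> {1..n} \<longrightarrow> card S > m \<longrightarrow>
          (\<forall>st. \<exists>beta :: nat \<Rightarrow> real. \<forall>ops. valid_ops m ops \<longrightarrow>
              \<not> (\<forall>j \<in> S. cong2pi (ori (run_ops alpha r m hseq ops st) j) (beta j)))"
  proof (intro allI impI)
    fix S st assume S: "S \<subseteq> {1..n}" and cS: "card S > m"
    have fin: "finite S" using S finite_subset by blast
    obtain w where w: "\<exists>j\<in>S. w j \<noteq> 0" "\<forall>i\<in>{1..m}. (\<Sum>j\<in>S. w j * Amat alpha m j i) = 0"
      using dep_rows[OF fin cS] by blast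
    define W where "W = (\<Sum>j\<in>S. w j * w j)"
    have W: "W \<noteq> 0"
    proof -
      obtain j0 where j0: "j0 \<in> S" "w j0 \<noteq> 0" using w(1) by blast
      have "w j0 * w j0 \<le> W" unfolding W_def
        using fin j0 by (intro member_le_sum) auto
      moreover have "w j0 * w j0 > 0" using j0(2) by (auto simp: zero_less_mult_iff linorder_neq_iff)
      ultimately show ?thesis by simp
    qed
    define C where "C = {(\<Sum>j\<in>S. w j * of_int (k j)) | k :: nat \<Rightarrow> int. True}"
    have "countable C" unfolding C_def by (rule countable_combs[OF fin])
    then obtain y where y: "y \<notin> C" using uncountable_UNIV_real
    proof -
      have "C \<noteq> UNIV" using \<open>countable C\<close> uncountable_UNIV_real by auto
      then show ?thesis using that by blast
    qed
    define c where "c = 2 * pi * y / W"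
    show "\<exists>beta :: nat \<Rightarrow> real. \<forall>ops. valid_ops m ops \<longrightarrow>
              \<not> (\<forall>j \<in> S. cong2pi (ori (run_ops alpha r m hseq ops st) j) (beta j))"
    proof (intro exI[of _ "\<lambda>j. ori st j + c * w j"] allI impI notI)
      fix ops assume v: "valid_ops m ops"
        and hit: "\<forall>j \<in> S. cong2pi (ori (run_ops alpha r m hseq ops st) j) (ori st j + c * w j)"
      have "\<forall>j\<in>S. \<exists>k::int. c * w j - (\<Sum>i = 1..m. Amat alpha m j i * usum m ops i) = 2 * pi * of_int k"
      proof
        fix j assume jS: "j \<in> S"
        have c1: "cong2pi (ori (run_ops alpha r m hseq ops st) j - ori st j) (\<Sum>i = 1..m. Amat alpha m j i * usum m ops i)"
          using A[OF v] jS S by blast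
        have c2: "cong2pi (ori (run_ops alpha r m hseq ops st) j - ori st j) (c * w j)"
          using hit jS by (auto intro: cong_diff)
        have "cong2pi (c * w j) (\<Sum>i = 1..m. Amat alpha m j i * usum m ops i)"
          using cong_trans[OF cong_sym[OF c2] c1] .
        then show "\<exists>k::int. c * w j - (\<Sum>i = 1..m. Amat alpha m j i * usum m ops i) = 2 * pi * of_int k"
          unfolding cong2pi_def .
      qed
      then obtain k :: "nat \<Rightarrow> int" where k: "\<forall>j\<in>S. c * w j - (\<Sum>i = 1..m. Amat alpha m j i * usum m ops i) = 2 * pi * of_int (k j)"
        by metis
      have "(\<Sum>j\<in>S. w j * (c * w j - (\<Sum>i = 1..m. Amat alpha m j i * usum m ops i)))
          = c * W - (\<Sum>j\<in>S. \<Sum>i = 1..m. w j * Amat alpha m j i * usum m ops i)"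
        unfolding W_def by (simp add: right_diff_distrib sum_subtractf sum_distrib_left mult.assoc mult.left_commute)
      also have "(\<Sum>j\<in>S. \<Sum>i = 1..m. w j * Amat alpha m j i * usum m ops i)
          = (\<Sum>i = 1..m. (\<Sum>j\<in>S. w j * Amat alpha m j i) * usum m ops i)"
        by (simp add: sum.swap[of _ S] sum_distrib_right)
      also have "\<dots> = 0" using w(2) by simp
      finally have e1: "(\<Sum>j\<in>S. w j * (c * w j - (\<Sum>i = 1..m. Amat alpha m j i * usum m ops i))) = c * W" by simp
      have "(\<Sum>j\<in>S. w j * (c * w j - (\<Sum>i = 1..m. Amat alpha m j i * usum m ops i)))
          = (\<Sum>j\<in>S. w j * (2 * pi * of_int (k j)))"
        using k by (intro sum.cong) auto
      then have "c * W = 2 * pi * (\<Sum>j\<in>S. w j * of_int (k j))"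
        using e1 by (simp add: sum_distrib_left mult.assoc mult.left_commute)
      then have "y = (\<Sum>j\<in>S. w j * of_int (k j))" using W unfolding c_def by (simp add: field_simps)
      then have "y \<in> C" unfolding C_def by blast
      then show False using y by simp
    qed
  qed
  show ?thesis using A B C by blast
qed

end
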